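(* Let $A,B \in\mathbb{C}^{n\times n}$. If $A\leq^{GD1}B$, then $A\leq^{D,-}B$.
   Context: For $A\in\mathbb{C}^{n\times n}$, $ind(A)$ is the smallest nonnegative integer $k$ with $\mathrm{rank}(A^k)=\mathrm{rank}(A^{k+1})$. $A\{1\}$ is the set of matrices $X$ with $AXA=A$. With $k=ind(A)$, $A\{GD\}$ is the set of matrices $X$ with $AXA=A$, $XA^{k+1}=A^k$, $A^{k+1}X=A^k$ (G-Drazin inverses). The Drazin inverse $A^D$ is the unique $X$ with $XAX=X$, $XA=AX$, $XA^{k+1}=A^k$. A GD1 inverse of $A$ is a matrix $A^{GD1}=A^{GD}AA^-$ with $A^-\in A\{1\}$, $A^{GD}\in A\{GD\}$. We write $A\leq^{GD1}B$ if $AA^{GD1}=BA^{GD1}$ and $A^{GD1}A=A^{GD1}B$ for some GD1 inverse $A^{GD1}$ of $A$. For $A^-\in A\{1\}$, the D1 inverse is $A^{D,-}=A^DAA^-$; we write $A\leq^{D,-}B$ if $A^{D,-}A=A^{D,-}B$ and $AA^{D,-}=BA^{D,-}$ for some D1 inverse $A^{D,-}$ of $A$ (i.e. for some $A^-\in A\{1\}$). *)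

theory Defs
  imports "HOL-Analysis.Analysis"
begin

type_synonym 'n cmat = "complex ^'n^'n"

primrec mpow :: "'n::finite cmat \<Rightarrow> nat \<Rightarrow> 'n cmat" where
  "mpow A 0 = mat 1"
| "mpow A (Suc k) = A ** mpow A k"

definition ind :: "'n::finite cmat \<Rightarrow> nat" where
  "ind A = (LEAST k. rank (mpow A k) = rank (mpow A (Suc k)))"

definition inner_inv :: "'n::finite cmat \<Rightarrow> 'n cmat set" where
  "inner_inv A = {X. A ** X ** A = A}"

definition gd_inv :: "'n::finite cmat \<Rightarrow> 'n cmat set" where
  "gd_inv A = {X. A ** X ** A = A \<and> X ** mpow A (Suc (ind A)) = mpow A (ind A)
                 \<and> mpow A (Suc (ind A)) ** X = mpow A (ind A)}"

definition drazin :: "'n::finite cmat \<Rightarrow> 'n cmat" where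
  "drazin A = (THE X. X ** A ** X = X \<and> X ** A = A ** X
                      \<and> X ** mpow A (Suc (ind A)) = mpow A (ind A))"

definition gd1_inv :: "'n::finite cmat \<Rightarrow> 'n cmat set" where
  "gd1_inv A = {G ** A ** M | G M. G \<in> gd_inv A \<and> M \<in> inner_inv A}"

definition gd1_le :: "'n::finite cmat \<Rightarrow> 'n cmat \<Rightarrow> bool" where
  "gd1_le A B \<longleftrightarrow> (\<exists>X \<in> gd1_inv A. A ** X = B ** X \<and> X ** A = X ** B)"

definition d1_inv :: "'n::finite cmat \<Rightarrow> 'n cmat set" where
  "d1_inv A = {drazin A ** A ** M | M. M \<in> inner_inv A}"

definition d1_le :: "'n::finite cmat \<Rightarrow> 'n cmat \<Rightarrow> bool" where
  "d1_le A B \<longleftrightarrow> (\<exists>X \<in> d1_inv A. X ** A = X ** B \<and> A ** X = B ** X)"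

end

theory Submission
  imports Defs
begin

lemma mpow_add: "mpow A (m + n) = mpow A m ** mpow A n"
  by (induction m) (simp_all add: matrix_mul_assoc matrix_mul_lid)

lemma mpow_Suc2: "mpow A (Suc n) = mpow A n ** A"
proof -
  have "mpow A (n + 1) = mpow A n ** mpow A 1" by (rule mpow_add)
  then show ?thesis by (simp add: matrix_mul_rid)
qed

lemma comm_pow: "X ** A = A ** X \<Longrightarrow> X ** mpow A n = mpow A n ** X"
proof (induction n)
  case 0 then show ?case by (simp add: matrix_mul_lid matrix_mul_rid)
next
  case (Suc n)
  have "X ** mpow A (Suc n) = (X ** A) ** mpow A n" by (simp add: matrix_mul_assoc)
  also have "\<dots> = A ** (X ** mpow A n)" using Suc.prems by (metis matrix_mul_assoc)
  also have "\<dots> = mpow A (Suc n) ** X" using Suc by (metis matrix_mul_assoc mpow.simps(2))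
  finally show ?case .
qed

lemma comm_pow2: "X ** A = A ** X \<Longrightarrow> mpow X m ** mpow A n = mpow A n ** mpow X m"
proof -
  assume h: "X ** A = A ** X"
  have c: "X ** mpow A n = mpow A n ** X" using comm_pow[OF h] .
  show ?thesis
    by (rule sym, rule comm_pow[of "mpow A n" X m], rule sym, rule c)
qed

lemma drazin_pow:
  assumes "X ** A ** X = X" "X ** A = A ** X"
  shows "X = mpow X (Suc j) ** mpow A j"
proof (induction j)
  case 0 then show ?case by (simp add: matrix_mul_rid)
next
  case (Suc j)
  have "mpow X (Suc (Suc j)) ** mpow A (Suc j) = X ** (mpow X (Suc j) ** mpow A j) ** A"
    by (simp only: mpow.simps(2)[of X "Suc j"] mpow_Suc2[of A j] matrix_mul_assoc)
  also have "\<dots> = X ** (X ** A)" using Suc by (simp add: matrix_mul_assoc)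
  also have "\<dots> = X" using assms by (simp add: matrix_mul_assoc)
  finally show ?case by simp
qed

lemma drazin_pow2:
  assumes "X ** A ** X = X" "X ** A = A ** X"
  shows "X = mpow A j ** mpow X (Suc j)"
  using drazin_pow[OF assms, of j] comm_pow2[OF assms(2)] by metis

lemma gd_left:
  assumes "G ** mpow A (Suc k) = mpow A k"
  shows "mpow G j ** mpow A (k + j) = mpow A k"
proof (induction j)
  case 0 then show ?case by (simp add: matrix_mul_lid)
next
  case (Suc j)
  have "mpow G (Suc j) ** mpow A (k + Suc j) = mpow G j ** (G ** mpow A (Suc k)) ** mpow A j"
    using mpow_add[of A "Suc k" j] mpow_Suc2[of G j] by (simp add: matrix_mul_assoc)
  also have "\<dots> = mpow G j ** mpow A (k + j)"
    using assms mpow_add[of A k j] by (simp add: matrix_mul_assoc)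
  finally show ?case using Suc by simp
qed

lemma gd_right:
  assumes "mpow A (Suc k) ** G = mpow A k"
  shows "mpow A (k + j) ** mpow G j = mpow A k"
proof (induction j)
  case 0 then show ?case by (simp add: matrix_mul_rid)
next
  case (Suc j)
  have "mpow A (k + Suc j) ** mpow G (Suc j) = mpow A j ** (mpow A (Suc k) ** G) ** mpow G j"
    using mpow_add[of A j "Suc k"] by (simp add: matrix_mul_assoc add.commute)
  also have "\<dots> = mpow A (k + j) ** mpow G j"
    using assms mpow_add[of A j k] by (simp add: matrix_mul_assoc add.commute)
  finally show ?case using Suc by simp
qed

lemma drazin_unique:
  assumes "X ** A ** X = X" "X ** A = A ** X" "X ** mpow A (Suc k) = mpow A k"
      and "Y ** A ** Y = Y" "Y ** A = A ** Y" "Y ** mpow A (Suc k) = mpow A k"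
  shows "X = Y"
proof -
  have x1: "X = mpow A k ** mpow X (Suc k)" by (rule drazin_pow2[OF assms(1,2)])
  have y1: "Y = mpow Y (Suc k) ** mpow A k" by (rule drazin_pow[OF assms(4,5)])
  have "mpow A k = Y ** mpow A (Suc k)" using assms(6) by simp
  then have "X = Y ** (mpow A (Suc k) ** mpow X (Suc k))" using x1 by (simp add: matrix_mul_assoc)
  also have "mpow A (Suc k) ** mpow X (Suc k) = A ** X"
    using x1 by (metis matrix_mul_assoc mpow.simps(2))
  finally have X: "X = Y ** A ** X" by (simp add: matrix_mul_assoc)
  have "mpow A (Suc k) ** X = X ** mpow A (Suc k)" by (rule comm_pow[OF assms(2), symmetric])
  then have ax: "mpow A (Suc k) ** X = mpow A k" using assms(3) by simp
  have "Y = mpow Y (Suc k) ** mpow A (Suc k) ** X" using y1 ax by (metis matrix_mul_assoc)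
  also have "mpow Y (Suc k) ** mpow A (Suc k) = Y ** A"
    using y1 mpow_Suc2[of A k] by (simp add: matrix_mul_assoc)
  finally have "Y = Y ** A ** X" .
  with X show ?thesis by simp
qed

lemma drazin_exists:
  assumes l: "G ** mpow A (Suc k) = mpow A k" and r: "mpow A (Suc k) ** G = mpow A k"
  defines "D \<equiv> mpow A k ** mpow G (Suc k)"
  shows "D ** A ** D = D \<and> D ** A = A ** D \<and> D ** mpow A (Suc k) = mpow A k"
proof -
  have L: "\<And>j. mpow G j ** mpow A (k + j) = mpow A k" by (rule gd_left[OF l])
  have R: "\<And>j. mpow A (k + j) ** mpow G j = mpow A k" by (rule gd_right[OF r])
  have e1: "D = mpow G (Suc k) ** mpow A k"
  proof -
    have "D = mpow G (Suc k) ** mpow A (k + Suc k) ** mpow G (Suc k)"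
      unfolding D_def using L[of "Suc k"] by simp
    also have "\<dots> = mpow G (Suc k) ** mpow A k"
      using R[of "Suc k"] by (metis matrix_mul_assoc)
    finally show ?thesis .
  qed
  have e2: "mpow G k ** mpow A k = mpow A k ** mpow G k"
  proof -
    have "mpow G k ** mpow A k = mpow G k ** (mpow A (k + k) ** mpow G k)" using R[of k] by simp
    also have "\<dots> = mpow A k ** mpow G k" using L[of k] by (metis matrix_mul_assoc)
    finally show ?thesis .
  qed
  have DA: "D ** A = mpow G k ** mpow A k"
  proof -
    have "D ** A = mpow G k ** (G ** mpow A (Suc k))"
      unfolding e1 using mpow_Suc2[of G k] mpow_Suc2[of A k] by (simp add: matrix_mul_assoc)
    then show ?thesis using l by simp
  qed
  have AD: "A ** D = mpow A k ** mpow G k"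
  proof -
    have "A ** D = (mpow A (Suc k) ** G) ** mpow G k"
      unfolding D_def by (simp add: matrix_mul_assoc)
    then show ?thesis using r by simp
  qed
  have c2: "D ** A = A ** D" using DA AD e2 by simp
  have c3: "D ** mpow A (Suc k) = mpow A k"
  proof -
    have "D ** mpow A (Suc k) = mpow G (Suc k) ** mpow A (k + Suc k)"
      unfolding e1 by (metis matrix_mul_assoc mpow_add)
    then show ?thesis using L[of "Suc k"] by simp
  qed
  have c1: "D ** A ** D = D"
  proof -
    have "D ** A ** D = mpow G k ** mpow A k ** (mpow A k ** mpow G (Suc k))"
      unfolding DA by (simp only: D_def)
    also have "\<dots> = mpow G k ** mpow A (k + k) ** mpow G (Suc k)"
      by (simp only: mpow_add matrix_mul_assoc)
    also have "\<dots> = D" unfolding D_def using L[of k] by simp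
    finally show ?thesis .
  qed
  show ?thesis using c1 c2 c3 by simp
qed

lemma drazin_props:
  assumes "G \<in> gd_inv A"
  shows "drazin A ** A ** drazin A = drazin A \<and> drazin A ** A = A ** drazin A
         \<and> drazin A ** mpow A (Suc (ind A)) = mpow A (ind A)"
proof -
  let ?k = "ind A"
  let ?D = "mpow A ?k ** mpow G (Suc ?k)"
  have P: "?D ** A ** ?D = ?D \<and> ?D ** A = A ** ?D \<and> ?D ** mpow A (Suc ?k) = mpow A ?k"
    using assms unfolding gd_inv_def by (intro drazin_exists) auto
  have U: "\<And>X. X ** A ** X = X \<and> X ** A = A ** X \<and> X ** mpow A (Suc ?k) = mpow A ?k \<Longrightarrow> X = ?D"
  proof -
    fix X assume "X ** A ** X = X \<and> X ** A = A ** X \<and> X ** mpow A (Suc ?k) = mpow A ?k"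
    then show "X = ?D" using P drazin_unique[of X A ?k ?D] by blast
  qed
  have E: "drazin A = ?D" unfolding drazin_def
    by (rule the_equality, rule P, rule U)
  show ?thesis unfolding E by (rule P)
qed

theorem proposition2p12:
  fixes A B :: "complex ^'n^'n"
  assumes "gd1_le A B"
  shows "d1_le A B"
proof -
  obtain G M where G: "G \<in> gd_inv A" and M: "M \<in> inner_inv A"
    and h1: "A ** (G ** A ** M) = B ** (G ** A ** M)"
    and h2: "(G ** A ** M) ** A = (G ** A ** M) ** B"
    using assms unfolding gd1_le_def gd1_inv_def by blast
  let ?k = "ind A"
  let ?D = "drazin A"
  have AGA: "A ** G ** A = A" and gl: "G ** mpow A (Suc ?k) = mpow A ?k"
    and gr: "mpow A (Suc ?k) ** G = mpow A ?k"
    using G unfolding gd_inv_def by auto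
  have AMA: "A ** M ** A = A" using M unfolding inner_inv_def by auto
  have DP: "?D ** A ** ?D = ?D" "?D ** A = A ** ?D" "?D ** mpow A (Suc ?k) = mpow A ?k"
    using drazin_props[OF G] by auto
  have D1: "?D = mpow ?D (Suc ?k) ** mpow A ?k" by (rule drazin_pow[OF DP(1,2)])
  have D2: "?D = mpow A ?k ** mpow ?D (Suc ?k)" by (rule drazin_pow2[OF DP(1,2)])
  have DAG: "?D ** A ** G = ?D"
  proof -
    have "?D ** A ** G = mpow ?D (Suc ?k) ** (mpow A (Suc ?k) ** G)"
      by (subst (1) D1) (metis matrix_mul_assoc mpow_Suc2 mpow.simps(2))
    then show ?thesis using gr D1 by simp
  qed
  have GAD: "G ** A ** ?D = ?D"
  proof -
    have "G ** A ** ?D = (G ** mpow A (Suc ?k)) ** mpow ?D (Suc ?k)"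
      by (subst D2) (simp add: matrix_mul_assoc)
    then show ?thesis using gl D2 by simp
  qed
  let ?Y = "?D ** A ** M"
  have Yin: "?Y \<in> d1_inv A" using M unfolding d1_inv_def by blast
  have "?D ** A = ?D ** A ** G ** A" using DAG by simp
  also have "\<dots> = ?D ** A ** (G ** A ** M ** A)" using AMA by (metis matrix_mul_assoc)
  also have "\<dots> = ?D ** A ** (G ** A ** M ** B)" using h2 by (simp add: matrix_mul_assoc)
  also have "\<dots> = ?D ** A ** M ** B" using DAG by (simp add: matrix_mul_assoc)
  finally have e1: "?D ** A = ?Y ** B" .
  have "?Y ** A = ?D ** A" using AMA by (metis matrix_mul_assoc)
  with e1 have E1: "?Y ** A = ?Y ** B" by simp
  have "A ** M = B ** (G ** A ** M)" using h1 AGA by (simp add: matrix_mul_assoc)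
  then have "A ** M ** A ** ?D = B ** G ** A ** M ** A ** ?D" by (simp add: matrix_mul_assoc)
  moreover have "A ** M ** A ** ?D = A ** ?D" using AMA by simp
  moreover have "B ** G ** A ** M ** A ** ?D = B ** G ** (A ** M ** A) ** ?D"
    by (simp only: matrix_mul_assoc)
  ultimately have "A ** ?D = B ** (G ** A ** ?D)" using AMA by (simp add: matrix_mul_assoc)
  then have AD: "A ** ?D = B ** ?D" using GAD by simp
  have E2: "A ** ?Y = B ** ?Y" using AD by (simp add: matrix_mul_assoc)
  show ?thesis unfolding d1_le_def using Yin E1 E2 by blast
qed

end
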